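(* Under the standing setup and with $u$, $z^*$, $r_u$, $\delta_v$, $z_v$ as in the context, assume $\beta(u)\ne0$ and let $v\in B(u,r_u)\cap\widetilde X$ satisfy $\|u-v\|\le\frac{\varepsilon\|\beta(u)\|}{480}$. Then \[\|z_v-\beta(v)\|\le\frac{128\|u-u_{NN}\|^{1/2}}{\varepsilon^{1/2}}\|u-v\|^{1/2}.\]
   Context: Norms are Euclidean; $B(x,r)$ is the open ball. Standing setup: $X\subseteq\mathbb{R}^d$ has reach $\tau_X>0$, where $\tau_X=\sup\{t\ge0:\text{every }x\text{ with }d(x,X)<t\text{ has a unique closest point in }\overline X\}$; $\widetilde X=X+B(0,\tau_X/2)$; for $u\in\widetilde X$, $u_{NN}$ is the unique closest point to $u$ in $\overline X$, and it is a known fact that $\|u_{NN}-v_{NN}\|\le2\|u-v\|$ for all $u,v\in\widetilde X$. $\varepsilon\in(0,1)$. $S_X=\overline{\{(x-y)/\|x-y\|:x\ne y\in X\}}$. A linear $\Pi$ provides $\eta$-convex hull distortion for $T\subseteq S^{d-1}$ if $|\,\|\Pi x\|-\|x\|\,|<\eta$ for all $x\in\operatorname{conv}(T)$. $\mathcal C=\{w_1,\ldots,w_\ell\}\subseteq S_X$ is finite with every $v\in S_X$ within distance $<\varepsilon/40$ of some $w_i$; $\Pi\in\mathbb{R}^{m\times d}$ provides $\frac{\varepsilon}{240}$-convex hull distortion for $S_X$. For $z\in\mathbb{R}^m$, $u\in\widetilde X$, $i=1,\ldots,\ell$: $\tilde g_i(z,u)=\langle z,\Pi w_i\rangle-\langle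 u-u_{NN},w_i\rangle-\frac{\varepsilon}{30}\|u-u_{NN}\|$, $\tilde g_{\ell+i}(z,u)=\langle u-u_{NN},w_i\rangle-\langle z,\Pi w_i\rangle-\frac{\varepsilon}{30}\|u-u_{NN}\|$; $\widetilde F_u=\{z:\tilde g_i(z,u)\le0\ \forall i\}$; $\beta(u)=\arg\min_{z\in\widetilde F_u}\|z\|$. Fix $u\in\widetilde X\setminus\overline X$ and $z^*\in\mathbb{R}^m$ with $\|z^*\|\le\|u-u_{NN}\|$ and $\tilde g_i(z^*,u)\le-\frac{\varepsilon}{60}\|u-u_{NN}\|$ for all $i$. Set $r_u=\min\{1,\frac{\varepsilon\|u-u_{NN}\|}{480}\}$, and for $v\in B(u,r_u)\cap\widetilde X$, $\delta_v=\frac{240\|u-v\|}{\varepsilon\|u-u_{NN}\|}$, $z_v=(1-\delta_v)\beta(u)+\delta_vz^*$. *)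

theory Defs
  imports "HOL-Analysis.Analysis" "HOL-Library.Extended_Real"
begin

definition is_closest :: "'a::euclidean_space set \<Rightarrow> 'a \<Rightarrow> 'a \<Rightarrow> bool" where
  "is_closest X x y \<longleftrightarrow> y \<in> closure X \<and> (\<forall>z\<in>closure X. dist x y \<le> dist x z)"

text \<open>Reach (as an extended real, it may be infinite, e.g. for convex X).\<close>
definition reach :: "'a::euclidean_space set \<Rightarrow> ereal" where
  "reach X = Sup {ereal t | t. t \<ge> 0 \<and>
      (\<forall>x. infdist x X < t \<longrightarrow> (\<exists>!y. is_closest X x y))}"

definition tube :: "'a::euclidean_space set \<Rightarrow> 'a set" where
  "tube X = {x + b | x b. x \<in> X \<and> ereal (norm b) < reach X / 2}"

definition nn :: "'a::euclidean_space set \<Rightarrow> 'a \<Rightarrow> 'a" where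
  "nn X u = (THE y. is_closest X u y)"

definition secants :: "'a::euclidean_space set \<Rightarrow> 'a set" where
  "secants X = closure {(x - y) /\<^sub>R norm (x - y) | x y. x \<in> X \<and> y \<in> X \<and> x \<noteq> y}"

definition cvx_hull_distortion :: "('a::euclidean_space \<Rightarrow> 'b::euclidean_space) \<Rightarrow> real \<Rightarrow> 'a set \<Rightarrow> bool" where
  "cvx_hull_distortion P eta T \<longleftrightarrow> (\<forall>x\<in>convex hull T. \<bar>norm (P x) - norm x\<bar> < eta)"

text \<open>The feasible set tilde F_u; the constraints are indexed by w in the finite set C
  (both families g_i and g_{l+i}).\<close>
definition feas :: "'a::euclidean_space set \<Rightarrow> ('a \<Rightarrow> 'b::euclidean_space) \<Rightarrow> 'a set \<Rightarrow> real \<Rightarrow> 'a \<Rightarrow> 'b set" where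
  "feas X P C eps u = {z. \<forall>w\<in>C.
      inner z (P w) - inner (u - nn X u) w - eps / 30 * norm (u - nn X u) \<le> 0 \<and>
      inner (u - nn X u) w - inner z (P w) - eps / 30 * norm (u - nn X u) \<le> 0}"

definition beta :: "'a::euclidean_space set \<Rightarrow> ('a \<Rightarrow> 'b::euclidean_space) \<Rightarrow> 'a set \<Rightarrow> real \<Rightarrow> 'a \<Rightarrow> 'b" where
  "beta X P C eps u = (THE z. z \<in> feas X P C eps u \<and> (\<forall>y\<in>feas X P C eps u. norm z \<le> norm y))"

end

theory Submission
  imports Defs
begin



lemma reach_X_nonempty:
  assumes "reach X > 0" shows "X \<noteq> {}"
proof
  assume X0: "X = {}"
  have "{ereal t | t. t \<ge> 0 \<and> (\<forall>x. infdist x X < t \<longrightarrow> (\<exists>!y. is_closest X x y))} \<subseteq> {0}"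
  proof
    fix e assume "e \<in> {ereal t | t. t \<ge> 0 \<and> (\<forall>x. infdist x X < t \<longrightarrow> (\<exists>!y. is_closest X x y))}"
    then obtain t where t: "e = ereal t" "t \<ge> 0" "\<forall>x. infdist x X < t \<longrightarrow> (\<exists>!y. is_closest X x y)" by blast
    have "t = 0"
    proof (rule ccontr)
      assume "t \<noteq> 0" then have "infdist 0 X < t" using t X0 by (simp add: infdist_def)
      then show False using t(3) X0 by (auto simp: is_closest_def)
    qed
    then show "e \<in> {0}" using t by (simp add: zero_ereal_def)
  qed
  then have "reach X \<le> 0" unfolding reach_def by (metis (no_types, lifting) Sup_le_iff singletonD subsetD order_refl)
  then show False using assms by simp
qed

lemma reach_uniq:
  assumes "ereal (infdist x X) < reach X" shows "\<exists>!y. is_closest X x y"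
  using assms unfolding reach_def less_Sup_iff by auto

lemma infdist_closure_eq: "infdist x (closure X) = infdist x X"
  by (simp add: infdist_eq_setdist)

lemma closest_exists:
  fixes X :: "'a::euclidean_space set"
  assumes "X \<noteq> {}" shows "\<exists>y. is_closest X x y"
proof -
  obtain y where "y \<in> closure X" "\<And>z. z \<in> closure X \<Longrightarrow> dist x y \<le> dist x z"
    using distance_attains_inf[of "closure X" x] assms by auto
  then show ?thesis unfolding is_closest_def by blast
qed

lemma closest_dist:
  fixes X :: "'a::euclidean_space set"
  assumes "X \<noteq> {}" "is_closest X x y" shows "dist x y = infdist x X"
proof -
  have y: "y \<in> closure X" "\<forall>z\<in>closure X. dist x y \<le> dist x z" using assms(2) by (auto simp: is_closest_def)
  have "infdist x (closure X) \<le> dist x y" using y infdist_le by blast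
  moreover have "dist x y \<le> infdist x (closure X)"
    unfolding infdist_def using y assms(1) by (auto intro!: cINF_greatest)
  ultimately show ?thesis using infdist_closure_eq by (metis order_antisym)
qed

locale reachR =
  fixes X :: "'a::euclidean_space set" and R :: real
  assumes XN: "X \<noteq> {}"
    and uniq: "\<And>x. infdist x X < R \<Longrightarrow> \<exists>!y. is_closest X x y"
begin

lemma nn_closest: assumes "infdist x X < R" shows "is_closest X x (nn X x)"
  unfolding nn_def using theI'[OF uniq[OF assms]] .

lemma nn_in: "infdist x X < R \<Longrightarrow> nn X x \<in> closure X"
  using nn_closest is_closest_def by blast

lemma nn_dist: "infdist x X < R \<Longrightarrow> dist x (nn X x) = infdist x X"
  using nn_closest closest_dist XN by blast

lemma nn_norm: "infdist x X < R \<Longrightarrow> norm (x - nn X x) = infdist x X"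
  using nn_dist by (simp add: dist_norm)

lemma nn_eq: "infdist x X < R \<Longrightarrow> is_closest X x c \<Longrightarrow> nn X x = c"
  using nn_closest uniq by blast

lemma infdist_le_closure: "c \<in> closure X \<Longrightarrow> infdist x X \<le> dist x c"
  by (metis infdist_closure_eq infdist_le)

lemma closest_iff: "c \<in> closure X \<Longrightarrow> dist x c \<le> infdist x X \<Longrightarrow> is_closest X x c"
  unfolding is_closest_def using infdist_le_closure by (meson order_trans)

lemma nn_cont:
  assumes "infdist x0 X + s < R" "0 \<le> s"
  shows "continuous_on (cball x0 s) (nn X)"
proof (rule continuous_from_closed_graph[of "cball x0 (s + R)"])
  have lt: "infdist w X < R" if "w \<in> cball x0 s" for w
    using that assms infdist_triangle[of w X x0] by (auto simp: dist_commute)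
  show "compact (cball x0 (s + R))" by simp
  show "nn X \<in> cball x0 s \<rightarrow> cball x0 (s + R)"
  proof
    fix w assume w: "w \<in> cball x0 s"
    have "dist x0 (nn X w) \<le> dist x0 w + dist w (nn X w)" by (rule dist_triangle)
    also have "\<dots> \<le> s + R" using w nn_dist[OF lt[OF w]] lt[OF w] by simp
    finally show "nn X w \<in> cball x0 (s + R)" by simp
  qed
  have eq: "(\<lambda>x. (x, nn X x)) ` cball x0 s =
      (cball x0 s \<times> closure X) \<inter> {p. dist (fst p) (snd p) = infdist (fst p) X}"
  proof (intro set_eqI iffI)
    fix p assume "p \<in> (\<lambda>x. (x, nn X x)) ` cball x0 s"
    then obtain w where "w \<in> cball x0 s" "p = (w, nn X w)" by auto
    then show "p \<in> (cball x0 s \<times> closure X) \<inter> {p. dist (fst p) (snd p) = infdist (fst p) X}"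
      using nn_in nn_dist lt by auto
  next
    fix p assume p: "p \<in> (cball x0 s \<times> closure X) \<inter> {p. dist (fst p) (snd p) = infdist (fst p) X}"
    obtain w c where pw: "p = (w, c)" by fastforce
    have "is_closest X w c" using p pw closest_iff by auto
    then have "nn X w = c" using nn_eq lt p pw by auto
    then show "p \<in> (\<lambda>x. (x, nn X x)) ` cball x0 s" using p pw by auto
  qed
  show "closed ((\<lambda>x. (x, nn X x)) ` cball x0 s)"
    unfolding eq
    by (intro closed_Int closed_Times closed_Collect_eq continuous_intros) auto
qed

end



primrec euler :: "'a::euclidean_space set \<Rightarrow> real \<Rightarrow> 'a \<Rightarrow> nat \<Rightarrow> 'a" where
  "euler X h x 0 = x"
| "euler X h x (Suc k) = euler X h x k + (h / infdist (euler X h x k) X) *\<^sub>R (euler X h x k - nn X (euler X h x k))"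

lemma norm_add_sq:
  fixes a n :: "'a::real_inner"
  shows "(norm (a + h *\<^sub>R n))^2 = (norm a)^2 + 2*h*inner n a + h^2 * (norm n)^2"
  by (simp only: power2_norm_eq_inner) (simp add: inner_add_left inner_add_right inner_commute algebra_simps power2_eq_square)

lemma sq_step:
  fixes D h t :: real
  assumes "0 < D" "0 \<le> h" "0 \<le> t" "t \<le> 1"
  shows "(D + h - h * t)^2 \<le> (D + h)^2 - 2 * h * (t * D)"
proof -
  have "(D + h)^2 - 2 * h * (t * D) - (D + h - h * t)^2 = h^2 * t * (2 - t)"
    by (simp add: power2_eq_square algebra_simps)
  moreover have "h^2 * t * (2 - t) \<ge> 0" using assms by simp
  ultimately show ?thesis by linarith
qed

context reachR begin

lemma step:
  assumes w: "infdist w X < R" and D: "0 < infdist w X" and h: "0 \<le> h"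
    and y: "y = w + (h / infdist w X) *\<^sub>R (w - nn X w)" and yR: "infdist y X < R"
    and om: "dist (nn X w) (nn X y) \<le> om" "0 \<le> om" "om \<le> infdist w X"
  shows "infdist w X + h - h * (om / infdist w X) \<le> infdist y X"
proof -
  define D where "D = infdist w X"
  define c where "c = nn X w"
  define c' where "c' = nn X y"
  define nu where "nu = (1 / D) *\<^sub>R (w - c)"
  have Dp: "0 < D" using D D_def by simp
  have wc: "norm (w - c) = D" using nn_norm[OF w] c_def D_def by simp
  have nu1: "norm nu = 1" using wc Dp nu_def by simp
  have hnu: "h *\<^sub>R nu = (h / D) *\<^sub>R (w - c)" using nu_def by simp
  have yeq: "y - c' = (w - c') + h *\<^sub>R nu" unfolding hnu using y c_def D_def by (simp add: algebra_simps)
  have c'in: "c' \<in> closure X" using nn_in[OF yR] c'_def by simp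
  have wc': "D \<le> norm (w - c')" using infdist_le_closure[OF c'in, of w] D_def by (simp add: dist_norm)
  have i1: "inner nu (w - c) = D" using nu_def wc Dp by (simp add: power2_norm_eq_inner[symmetric] power2_eq_square)
  have i2: "inner nu (c - c') \<ge> - om"
  proof -
    have "\<bar>inner nu (c - c')\<bar> \<le> norm nu * norm (c - c')" by (rule Cauchy_Schwarz_ineq2)
    also have "\<dots> \<le> om" using nu1 om(1) c_def c'_def by (simp add: dist_norm)
    finally show ?thesis by linarith
  qed
  have i3: "inner nu (w - c') \<ge> D - om"
  proof -
    have "inner nu (w - c') = inner nu (w - c) + inner nu (c - c')" by (simp add: inner_diff_right)
    then show ?thesis using i1 i2 by linarith
  qed
  have "(norm (y - c'))^2 = (norm (w - c'))^2 + 2 * h * inner nu (w - c') + h^2"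
    unfolding yeq norm_add_sq nu1 by simp
  also have "\<dots> \<ge> D^2 + 2 * h * (D - om) + h^2"
  proof -
    have "D^2 \<le> (norm (w - c'))^2" using wc' Dp by (simp add: power_mono)
    moreover have "2 * h * (D - om) \<le> 2 * h * inner nu (w - c')" using i3 h by (simp add: mult_left_mono)
    ultimately show ?thesis by linarith
  qed
  finally have sq: "(D + h)^2 - 2 * h * ((om / D) * D) \<le> (norm (y - c'))^2"
    using Dp by (simp add: power2_eq_square algebra_simps)
  have A: "(D + h - h * (om / D))^2 \<le> (D + h)^2 - 2 * h * ((om / D) * D)"
    by (rule sq_step) (use Dp h om D_def in \<open>auto simp: divide_le_eq_1\<close>)
  have "(D + h - h * (om / D))^2 \<le> (norm (y - c'))^2" using A sq by linarith
  moreover have "norm (y - c') = infdist y X" using nn_norm[OF yR] c'_def by simp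
  ultimately show ?thesis unfolding D_def[symmetric]
    by (metis abs_le_square_iff abs_of_nonneg infdist_nonneg order_trans abs_ge_self)
qed

end



context reachR begin

lemma ray_ext:
  assumes m: "0 < infdist x X" and s: "0 \<le> s" and mR: "infdist x X + s < R"
  shows "nn X (x + (s / infdist x X) *\<^sub>R (x - nn X x)) = nn X x"
proof -
  define m where "m = infdist x X"
  define a where "a = nn X x"
  define K where "K = cball x s"
  have mp: "0 < m" using m m_def by simp
  have lt: "infdist w X < R" if "w \<in> K" for w
    using that mR infdist_triangle[of w X x] by (auto simp: K_def m_def dist_commute)
  have approx: "\<exists>w\<in>K. m + s - \<eta> \<le> infdist w X" if eta: "\<eta> > 0" for \<eta>
  proof (cases "s = 0")
    case True then show ?thesis using eta by (auto simp: K_def m_def intro!: bexI[of _ x])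
  next
    case False
    then have sp: "0 < s" using s by simp
    define om where "om = min m (\<eta> * m / s)"
    have omp: "0 < om" using mp sp eta by (simp add: om_def)
    have uc: "uniformly_continuous_on K (nn X)"
      unfolding K_def by (rule compact_uniformly_continuous[OF nn_cont[OF mR s]]) simp
    obtain \<delta> where dp: "\<delta> > 0" and dl0: "\<forall>w\<in>K. \<forall>w'\<in>K. dist w' w < \<delta> \<longrightarrow> dist (nn X w') (nn X w) < om"
      using uc omp unfolding uniformly_continuous_on_def by blast
    have dl: "\<And>w w'. w \<in> K \<Longrightarrow> w' \<in> K \<Longrightarrow> dist w' w < \<delta> \<Longrightarrow> dist (nn X w') (nn X w) < om"
      using dl0 by blast
    obtain N :: nat where N: "s / \<delta> < real N" using reals_Archimedean2 by blast
    have "0 < s / \<delta>" using sp dp by simp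
    then have Np: "0 < real N" using N by linarith
    define h where "h = s / real N"
    have hp: "0 < h" using sp Np by (simp add: h_def)
    have hd: "h < \<delta>" using N dp Np unfolding h_def by (simp add: divide_less_eq mult.commute)
    define th where "th = om / m"
    have th1: "th \<le> 1" "0 \<le> th" using mp omp by (auto simp: th_def om_def)
    have Nh: "real N * h = s" using Np by (simp add: h_def)
    have claim: "k \<le> N \<longrightarrow> dist x (euler X h x k) \<le> real k * h \<and> m + real k * h * (1 - th) \<le> infdist (euler X h x k) X" for k
    proof (induction k)
      case 0 then show ?case by (simp add: m_def)
    next
      case (Suc k)
      show ?case
      proof
        assume kN: "Suc k \<le> N"
        define w where "w = euler X h x k"
        define y where "y = euler X h x (Suc k)"
        have IH: "dist x w \<le> real k * h" "m + real k * h * (1 - th) \<le> infdist w X"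
          using Suc kN by (auto simp: w_def)
        have "real k * h \<le> real N * h" using kN hp by (simp add: mult_right_mono)
        then have wK: "w \<in> K" using IH Nh by (simp add: K_def)
        have "0 \<le> real k * h * (1 - th)" using hp th1 by simp
        then have Dm: "m \<le> infdist w X" using IH by linarith
        have Dp: "0 < infdist w X" using Dm mp by linarith
        have yw: "y = w + (h / infdist w X) *\<^sub>R (w - nn X w)" by (simp add: y_def w_def)
        have dwy: "dist w y = h"
          using yw nn_norm[OF lt[OF wK]] Dp hp by (simp add: dist_norm)
        have "dist x y \<le> dist x w + dist w y" by (rule dist_triangle)
        then have dxy: "dist x y \<le> real (Suc k) * h" using IH dwy by (simp add: algebra_simps)
        have "real (Suc k) * h \<le> real N * h" using kN hp by (simp add: mult_right_mono)
        then have yK: "y \<in> K" using dxy Nh by (simp add: K_def)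
        have "dist (nn X y) (nn X w) < om" using dl[OF wK yK] dwy hd by (simp add: dist_commute)
        then have dnn: "dist (nn X w) (nn X y) \<le> om" by (simp add: dist_commute)
        have st: "infdist w X + h - h * (om / infdist w X) \<le> infdist y X"
          by (rule step[OF lt[OF wK] Dp less_imp_le[OF hp] yw lt[OF yK] dnn less_imp_le[OF omp]])
             (use Dm om_def in auto)
        have "om / infdist w X \<le> om / m" using Dm mp omp by (simp add: divide_left_mono)
        then have "h * (om / infdist w X) \<le> h * th" unfolding th_def by (rule mult_left_mono) (use hp in auto)
        then show "dist x y \<le> real (Suc k) * h \<and> m + real (Suc k) * h * (1 - th) \<le> infdist y X"
          using st IH dxy by (simp add: algebra_simps)
      qed
    qed
    from claim[of N] have cN: "dist x (euler X h x N) \<le> s" "m + s * (1 - th) \<le> infdist (euler X h x N) X"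
      using Nh by auto
    have "s * th \<le> \<eta>"
    proof -
      have "om \<le> \<eta> * m / s" by (simp add: om_def)
      then have "s * om \<le> \<eta> * m" using sp by (simp add: le_divide_eq mult.commute)
      then show ?thesis using mp by (simp add: th_def divide_le_eq mult.commute)
    qed
    then show ?thesis using cN by (intro bexI[of _ "euler X h x N"]) (auto simp: K_def algebra_simps)
  qed
  obtain ws where ws: "ws \<in> K" "\<And>y. y \<in> K \<Longrightarrow> infdist y X \<le> infdist ws X"
  proof -
    have "continuous_on K (\<lambda>w. infdist w X)" by (intro continuous_intros)
    then show ?thesis using continuous_attains_sup[of K "\<lambda>w. infdist w X"] s that by (auto simp: K_def)
  qed
  have big: "m + s \<le> infdist ws X"
  proof (rule field_le_epsilon)
    fix e :: real assume "0 < e"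
    then obtain w where "w \<in> K" "m + s - e \<le> infdist w X" using approx by blast
    then show "m + s \<le> infdist ws X + e" using ws(2)[of w] by linarith
  qed
  have ain: "a \<in> closure X" using nn_in[of x] mR s a_def by simp
  have xa: "norm (x - a) = m" using nn_norm[of x] mR s by (simp add: a_def m_def)
  have wsx: "norm (ws - x) \<le> s" using ws(1) by (simp add: K_def dist_norm norm_minus_commute)
  have tri: "norm (ws - a) \<le> norm (ws - x) + norm (x - a)"
  proof -
    have "ws - a = (ws - x) + (x - a)" by simp
    then show ?thesis by (metis norm_triangle_ineq)
  qed
  have le2: "infdist ws X \<le> norm (ws - a)" using infdist_le_closure[OF ain] by (simp add: dist_norm)
  have eqs: "norm (ws - x) = s" "norm (ws - a) = norm (ws - x) + norm (x - a)" "infdist ws X = norm (ws - a)"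
    using tri le2 big xa wsx by linarith+
  have "is_closest X ws a" using closest_iff[OF ain] eqs by (simp add: dist_norm)
  then have nnws: "nn X ws = a" using nn_eq lt ws(1) by blast
  have "norm ((ws - x) + (x - a)) = norm (ws - x) + norm (x - a)" using eqs by simp
  then have "norm (ws - x) *\<^sub>R (x - a) = norm (x - a) *\<^sub>R (ws - x)" using norm_triangle_eq by blast
  then have "s *\<^sub>R (x - a) = m *\<^sub>R (ws - x)" using eqs xa by simp
  then have "(1/m) *\<^sub>R (s *\<^sub>R (x - a)) = (1/m) *\<^sub>R (m *\<^sub>R (ws - x))" by simp
  then have "(s / m) *\<^sub>R (x - a) = ws - x" using mp by simp
  then have "ws = x + (s / m) *\<^sub>R (x - a)" by (simp add: algebra_simps)
  then show ?thesis using nnws by (simp add: a_def m_def)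
qed

end



context reachR begin

lemma half_ineq:
  assumes du: "infdist u X \<le> S" and SR: "S < R" and b: "b \<in> closure X"
  shows "2 * S * inner (u - nn X u) (b - nn X u) \<le> infdist u X * (norm (nn X u - b))^2"
proof (cases "infdist u X = 0")
  case True
  have "norm (u - nn X u) = 0" using nn_norm[of u] True SR du by simp
  then show ?thesis using True by simp
next
  case False
  define d where "d = infdist u X"
  define a where "a = nn X u"
  have dp: "0 < d" using False infdist_nonneg[of u X] d_def by simp
  have uR: "infdist u X < R" using du SR by simp
  have ua: "norm (u - a) = d" using nn_norm[OF uR] by (simp add: a_def d_def)
  define p where "p = u + ((S - d) / d) *\<^sub>R (u - a)"
  have np: "nn X p = a" using ray_ext[of u "S - d"] dp du SR by (simp add: p_def a_def d_def)
  have pR: "infdist p X < R"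
  proof -
    have "infdist p X \<le> infdist u X + dist p u" by (rule infdist_triangle)
    also have "dist p u = ((S - d) / d) * d" using ua dp du d_def by (simp add: p_def dist_norm)
    also have "\<dots> = S - d" using dp by simp
    finally show ?thesis using SR d_def by simp
  qed
  have pa: "p - a = (S / d) *\<^sub>R (u - a)"
  proof -
    have "p - a = (u - a) + ((S - d) / d) *\<^sub>R (u - a)" by (simp add: p_def)
    also have "\<dots> = (1 + (S - d) / d) *\<^sub>R (u - a)" by (simp add: algebra_simps)
    also have "1 + (S - d) / d = S / d" using dp by (simp add: field_simps)
    finally show ?thesis .
  qed
  have npa: "norm (p - a) = S" using pa ua dp du d_def by simp
  have "infdist p X \<le> dist p b" using infdist_le_closure[OF b] .
  moreover have "dist p a = infdist p X" using nn_dist[OF pR] np by simp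
  ultimately have le: "S \<le> norm (p - b)" using npa by (simp add: dist_norm)
  have "p - b = (a - b) + (S / d) *\<^sub>R (u - a)" using pa by (simp add: algebra_simps)
  then have "(norm (p - b))^2 = (norm (a - b))^2 + 2 * (S / d) * inner (u - a) (a - b) + (S / d)^2 * (norm (u - a))^2"
    using norm_add_sq by metis
  also have "(S / d)^2 * (norm (u - a))^2 = S^2" using ua dp by (simp add: power_divide)
  finally have eq: "(norm (p - b))^2 = (norm (a - b))^2 + 2 * (S / d) * inner (u - a) (a - b) + S^2" .
  have "S^2 \<le> (norm (p - b))^2" using le du infdist_nonneg[of u X] by (simp add: power_mono)
  then have "0 \<le> (norm (a - b))^2 + 2 * (S / d) * inner (u - a) (a - b)" using eq by linarith
  then have "0 \<le> d * ((norm (a - b))^2 + 2 * (S / d) * inner (u - a) (a - b))" using dp by simp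
  also have "\<dots> = d * (norm (a - b))^2 + 2 * S * inner (u - a) (a - b)" using dp by (simp add: field_simps)
  finally have "2 * S * inner (u - a) (b - a) \<le> d * (norm (a - b))^2"
    by (simp add: inner_diff_right algebra_simps)
  then show ?thesis by (simp add: a_def d_def)
qed

lemma nn_lip:
  assumes uv: "infdist u X + infdist v X < R"
  shows "norm (nn X u - nn X v) \<le> 2 * norm (u - v)"
proof -
  define S where "S = infdist u X + infdist v X"
  define a where "a = nn X u"
  define b where "b = nn X v"
  have uR: "infdist u X < R" and vR: "infdist v X < R" using uv infdist_nonneg[of u X] infdist_nonneg[of v X] by linarith+
  have ain: "a \<in> closure X" using nn_in[OF uR] a_def by simp
  have bin: "b \<in> closure X" using nn_in[OF vR] b_def by simp
  have h1: "2 * S * inner (u - a) (b - a) \<le> infdist u X * (norm (a - b))^2"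
    using half_ineq[of u S b] bin uv infdist_nonneg[of v X] by (simp add: S_def a_def)
  have h2: "2 * S * inner (v - b) (a - b) \<le> infdist v X * (norm (b - a))^2"
    using half_ineq[of v S a] ain uv infdist_nonneg[of u X] by (simp add: S_def b_def)
  have nab: "norm (b - a) = norm (a - b)" by (rule norm_minus_commute)
  have id: "inner (u - a) (b - a) + inner (v - b) (a - b) = inner (u - v) (b - a) + (norm (a - b))^2"
    by (simp add: inner_diff_left inner_diff_right inner_commute power2_norm_eq_inner algebra_simps)
  have "2 * S * (inner (u - v) (b - a) + (norm (a - b))^2) \<le> S * (norm (a - b))^2"
    using h1 h2 nab unfolding id[symmetric] S_def by (simp add: algebra_simps)
  then have key: "S * (norm (a - b))^2 \<le> 2 * S * inner (v - u) (b - a)"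
    by (simp add: inner_diff_left algebra_simps)
  have cs: "inner (v - u) (b - a) \<le> norm (u - v) * norm (a - b)"
    using norm_cauchy_schwarz[of "v - u" "b - a"] by (simp add: norm_minus_commute)
  show ?thesis
  proof (cases "S = 0")
    case True
    then have "infdist u X = 0" "infdist v X = 0" using S_def infdist_nonneg[of u X] infdist_nonneg[of v X] by linarith+
    then have "u = a" "v = b" using nn_norm[OF uR] nn_norm[OF vR] a_def b_def by auto
    then show ?thesis by (simp add: a_def b_def)
  next
    case False
    then have Sp: "0 < S" using S_def infdist_nonneg[of u X] infdist_nonneg[of v X] by linarith
    have "S * (norm (a - b))^2 \<le> S * (2 * norm (u - v) * norm (a - b))"
    proof -
      have "2 * S * inner (v - u) (b - a) \<le> 2 * S * (norm (u - v) * norm (a - b))"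
        using cs Sp by (intro mult_left_mono) auto
      then show ?thesis using key by (simp add: algebra_simps)
    qed
    then have "(norm (a - b))^2 \<le> 2 * norm (u - v) * norm (a - b)" using Sp by simp
    then have "norm (a - b) \<le> 2 * norm (u - v)"
      by (cases "norm (a - b) = 0") (auto simp: power2_eq_square)
    then show ?thesis by (simp add: a_def b_def)
  qed
qed

end



lemma secants_norm:
  assumes "w \<in> secants X" shows "norm w \<le> 1"
proof -
  have "{(x - y) /\<^sub>R norm (x - y) | x y. x \<in> X \<and> y \<in> X \<and> x \<noteq> y} \<subseteq> sphere 0 1"
    by auto
  then have "secants X \<subseteq> sphere 0 1" unfolding secants_def by (rule closure_minimal) simp
  then show ?thesis using assms by auto
qed

lemma tube_infdist:
  assumes "u \<in> tube X" shows "ereal (infdist u X) < reach X / 2"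
proof -
  obtain x b where xb: "x \<in> X" "u = x + b" "ereal (norm b) < reach X / 2"
    using assms unfolding tube_def by blast
  have "infdist u X \<le> dist u x" using xb(1) by (rule infdist_le)
  also have "dist u x = norm b" using xb(2) by (simp add: dist_norm)
  finally show ?thesis using xb(3) by (meson ereal_less_eq(3) order_le_less_trans)
qed

lemma get_R:
  assumes r: "reach X > 0" and p: "ereal p < reach X / 2" and q: "ereal q < reach X / 2"
  shows "\<exists>R. p + q < R \<and> (\<forall>x. infdist x X < R \<longrightarrow> (\<exists>!y. is_closest X x y))"
proof (cases "reach X")
  case (real r0)
  have "p < r0 / 2" "q < r0 / 2" using p q real by auto
  moreover have "\<forall>x. infdist x X < r0 \<longrightarrow> (\<exists>!y. is_closest X x y)"
    using reach_uniq[of _ X] real by auto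
  ultimately show ?thesis by (intro exI[of _ r0]) auto
next
  case PInf
  then show ?thesis using reach_uniq[of _ X] by (intro exI[of _ "p + q + 1"]) auto
next
  case MInf
  then show ?thesis using r by simp
qed

lemma feas_eq:
  "feas X P C eps u = (\<Inter>w\<in>C. {z. inner (P w) z \<le> inner (u - nn X u) w + eps / 30 * norm (u - nn X u)} \<inter>
      {z. inner (P w) z \<ge> inner (u - nn X u) w - eps / 30 * norm (u - nn X u)})"
proof -
  have e1: "\<And>w. {z. inner z (P w) - inner (u - nn X u) w - eps / 30 * norm (u - nn X u) \<le> 0} =
     {z. inner (P w) z \<le> inner (u - nn X u) w + eps / 30 * norm (u - nn X u)}"
    by (auto simp: inner_commute)
  have e2: "\<And>w. {z. inner (u - nn X u) w - inner z (P w) - eps / 30 * norm (u - nn X u) \<le> 0} =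
     {z. inner (P w) z \<ge> inner (u - nn X u) w - eps / 30 * norm (u - nn X u)}"
    by (auto simp: inner_commute)
  have "feas X P C eps u = (\<Inter>w\<in>C. {z. inner z (P w) - inner (u - nn X u) w - eps / 30 * norm (u - nn X u) \<le> 0} \<inter>
      {z. inner (u - nn X u) w - inner z (P w) - eps / 30 * norm (u - nn X u) \<le> 0})"
    unfolding feas_def by auto
  then show ?thesis unfolding e1 e2 .
qed

lemma feas_closed: "closed (feas X P C eps u)"
  unfolding feas_eq by (intro closed_INT ballI closed_Int closed_halfspace_le closed_halfspace_ge)

lemma feas_convex: "convex (feas X P C eps u)"
  unfolding feas_eq by (intro convex_INT ballI convex_Int convex_halfspace_le convex_halfspace_ge)

lemma beta_props:
  assumes z0: "z0 \<in> feas X P C eps u"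
  shows "beta X P C eps u \<in> feas X P C eps u"
    and "\<And>y. y \<in> feas X P C eps u \<Longrightarrow> norm (beta X P C eps u) \<le> norm y"
    and "\<And>y. y \<in> feas X P C eps u \<Longrightarrow> (norm (y - beta X P C eps u))^2 \<le> (norm y)^2 - (norm (beta X P C eps u))^2"
proof -
  define F where "F = feas X P C eps u"
  have cl: "closed F" and cv: "convex F" and ne: "F \<noteq> {}" using feas_closed feas_convex z0 F_def by auto
  define c where "c = closest_point F 0"
  have c: "c \<in> F" "\<forall>y\<in>F. norm c \<le> norm y"
    using closest_point_exists[OF cl ne, of 0] by (auto simp: c_def)
  have ex1: "\<exists>!z. z \<in> F \<and> (\<forall>y\<in>F. norm z \<le> norm y)"
  proof (rule ex1I[of _ c])
    show "c \<in> F \<and> (\<forall>y\<in>F. norm c \<le> norm y)" using c by blast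
    fix z assume z: "z \<in> F \<and> (\<forall>y\<in>F. norm z \<le> norm y)"
    show "z = c" using any_closest_point_unique[OF cv cl, of z c 0] z c by auto
  qed
  have bc: "beta X P C eps u = c"
    unfolding beta_def F_def[symmetric] by (rule the1_equality[OF ex1]) (use c in blast)
  show "beta X P C eps u \<in> feas X P C eps u" using bc c F_def by simp
  show "\<And>y. y \<in> feas X P C eps u \<Longrightarrow> norm (beta X P C eps u) \<le> norm y" using bc c F_def by simp
  fix y assume y: "y \<in> feas X P C eps u"
  have "inner (0 - c) (y - c) \<le> 0" using any_closest_point_dot[OF cv cl c(1), of y 0] y c F_def by auto
  then have dot: "0 \<le> inner c (y - c)" by simp
  have "y = c + 1 *\<^sub>R (y - c)" by simp
  then have "(norm y)^2 = (norm c)^2 + 2 * 1 * inner (y - c) c + 1^2 * (norm (y - c))^2"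
    using norm_add_sq by metis
  then show "(norm (y - beta X P C eps u))^2 \<le> (norm y)^2 - (norm (beta X P C eps u))^2"
    using dot bc by (simp add: inner_commute)
qed

lemma fin_alg:
  fixes \<delta> X Y Z d :: real
  assumes "0 \<le> \<delta>" "\<delta> \<le> 1" "0 \<le> X" "X \<le> d" "0 \<le> Y" "0 \<le> Z"
    "Z \<le> (1 - \<delta>) * X + \<delta> * d" "X \<le> (1 - \<delta>) * Y + \<delta> * d"
  shows "Z^2 - Y^2 \<le> 4 * \<delta> * d^2"
proof -
  have "(1 - \<delta>) * Y \<le> Y" "(1 - \<delta>) * X \<le> X" using assms by (auto intro: mult_left_le_one_le)
  then have Y: "X - \<delta> * d \<le> Y" and Z: "Z \<le> X + \<delta> * d" using assms by linarith+
  have dd: "0 \<le> \<delta> * d" using assms by simp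
  have Z2: "Z^2 \<le> (X + \<delta> * d)^2" using Z assms by (simp add: power_mono)
  show ?thesis
  proof (cases "\<delta> * d \<le> X")
    case True
    have "(X - \<delta> * d)^2 \<le> Y^2" using Y True by (simp add: power_mono)
    then have "Z^2 - Y^2 \<le> (X + \<delta> * d)^2 - (X - \<delta> * d)^2" using Z2 by linarith
    also have "\<dots> = 4 * \<delta> * d * X" by (simp add: power2_eq_square algebra_simps)
    also have "\<dots> \<le> 4 * \<delta> * d * d" using assms dd by (intro mult_left_mono) auto
    finally show ?thesis by (simp add: power2_eq_square)
  next
    case False
    have "X + \<delta> * d \<le> 2 * (\<delta> * d)" using False by simp
    then have "(X + \<delta> * d)^2 \<le> (2 * (\<delta> * d))^2" using assms by (intro power_mono) auto
    also have "\<dots> = 4 * \<delta> * (\<delta> * d^2)" by (simp add: power2_eq_square algebra_simps)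
    also have "\<dots> \<le> 4 * \<delta> * d^2"
    proof -
      have "\<delta> * d^2 \<le> d^2" using assms by (intro mult_left_le_one_le) auto
      then show ?thesis using assms by (intro mult_left_mono) auto
    qed
    finally show ?thesis using Z2 assms by (smt (verit) zero_le_power2)
  qed
qed

lemma comb_inner: "inner ((1 - t) *\<^sub>R a + t *\<^sub>R b) c = (1 - t) * inner a c + t * inner b c"
  by (simp add: inner_add_left)

lemma norm_comb:
  fixes a b :: "'a::real_normed_vector"
  assumes "0 \<le> t" "t \<le> 1" shows "norm ((1 - t) *\<^sub>R a + t *\<^sub>R b) \<le> (1 - t) * norm a + t * norm b"
proof -
  have "norm ((1 - t) *\<^sub>R a + t *\<^sub>R b) \<le> norm ((1 - t) *\<^sub>R a) + norm (t *\<^sub>R b)" by (rule norm_triangle_ineq)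
  then show ?thesis using assms by simp
qed




lemma aff1: "(1 - t) * (a - A - c) + t * (b - A - c) = ((1 - t) * a + t * b) - A - (c::real)"
  by (simp add: algebra_simps)
lemma aff2: "(1 - t) * (A - a - c) + t * (A - b - c) = A - ((1 - t) * a + t * b) - (c::real)"
  by (simp add: algebra_simps)

theorem lemma4p7:
  fixes X :: "'a::euclidean_space set" and P :: "'a \<Rightarrow> 'b::euclidean_space"
    and C :: "'a set" and eps :: real and u v :: 'a and zs :: 'b
  assumes eps: "0 < eps" "eps < 1"
    and reach_pos: "reach X > 0"
    and C_fin: "finite C" and C_sub: "C \<subseteq> secants X"
    and C_net: "\<forall>s\<in>secants X. \<exists>w\<in>C. dist s w < eps / 40"
    and Pi_lin: "linear P"
    and Pi_dist: "cvx_hull_distortion P (eps / 240) (secants X)"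
    and u: "u \<in> tube X" "u \<notin> closure X"
    and zs_norm: "norm zs \<le> norm (u - nn X u)"
    and zs_feas: "\<forall>w\<in>C.
        inner zs (P w) - inner (u - nn X u) w - eps / 30 * norm (u - nn X u)
          \<le> - (eps / 60) * norm (u - nn X u) \<and>
        inner (u - nn X u) w - inner zs (P w) - eps / 30 * norm (u - nn X u)
          \<le> - (eps / 60) * norm (u - nn X u)"
    and beta_nz: "beta X P C eps u \<noteq> 0"
    and v: "v \<in> ball u (min 1 (eps * norm (u - nn X u) / 480))" "v \<in> tube X"
    and uv: "norm (u - v) \<le> eps * norm (beta X P C eps u) / 480"
  shows "let \<delta> = 240 * norm (u - v) / (eps * norm (u - nn X u));
             zv = (1 - \<delta>) *\<^sub>R beta X P C eps u + \<delta> *\<^sub>R zs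
         in norm (zv - beta X P C eps v)
            \<le> 128 * sqrt (norm (u - nn X u)) / sqrt eps * sqrt (norm (u - v))"
proof -
  have XN: "X \<noteq> {}" using reach_X_nonempty reach_pos .
  obtain R where R: "infdist u X + infdist v X < R" "\<forall>x. infdist x X < R \<longrightarrow> (\<exists>!y. is_closest X x y)"
    using get_R[OF reach_pos tube_infdist[OF u(1)] tube_infdist[OF v(2)]] by blast
  interpret reachR X R using XN R(2) by unfold_locales auto
  have uR: "infdist u X < R" and vR: "infdist v X < R"
    using R(1) infdist_nonneg[of u X] infdist_nonneg[of v X] by linarith+
  define du where "du = u - nn X u"
  define dv where "dv = v - nn X v"
  define d where "d = norm du"
  define h where "h = norm (u - v)"
  have "nn X u \<in> closure X" using nn_in[OF uR] .
  then have "u \<noteq> nn X u" using u(2) by auto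
  then have dp: "0 < d" by (simp add: d_def du_def)
  have hlt: "h < eps * d / 480" using v(1) by (simp add: h_def d_def du_def dist_norm)
  have h0: "0 \<le> h" by (simp add: h_def)
  define \<delta> where "\<delta> = 240 * h / (eps * d)"
  have \<delta>0: "0 \<le> \<delta>" using h0 dp eps by (simp add: \<delta>_def)
  have \<delta>1: "\<delta> \<le> 1/2"
  proof -
    have "240 * h \<le> (eps * d) / 2" using hlt by simp
    then show ?thesis using dp eps by (simp add: \<delta>_def divide_le_eq)
  qed
  have \<delta>s: "\<delta> * (eps / 60 * d) = 4 * h" using dp eps by (simp add: \<delta>_def field_simps)
  have lip: "norm (nn X u - nn X v) \<le> 2 * h" using nn_lip[OF R(1)] by (simp add: h_def)
  have dd: "norm (du - dv) \<le> 3 * h"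
  proof -
    have "du - dv = (u - v) - (nn X u - nn X v)" by (simp add: du_def dv_def algebra_simps)
    then have "norm (du - dv) \<le> norm (u - v) + norm (nn X u - nn X v)" by (metis norm_triangle_ineq4)
    then show ?thesis using lip by (simp add: h_def)
  qed
  have wn: "\<And>w. w \<in> C \<Longrightarrow> norm w \<le> 1" using C_sub secants_norm by blast
  have pi: "\<bar>inner du w - inner dv w\<bar> \<le> 3 * h" if "w \<in> C" for w
  proof -
    have "\<bar>inner du w - inner dv w\<bar> = \<bar>inner (du - dv) w\<bar>" by (simp add: inner_diff_left)
    also have "\<dots> \<le> norm (du - dv) * norm w" by (rule Cauchy_Schwarz_ineq2)
    also have "\<dots> \<le> 3 * h * 1" using dd wn[OF that] h0 by (intro mult_mono) auto
    finally show ?thesis by simp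
  qed
  have pn: "\<bar>eps / 30 * norm du - eps / 30 * norm dv\<bar> \<le> h / 10"
  proof -
    have "\<bar>norm du - norm dv\<bar> \<le> norm (du - dv)" by (rule norm_triangle_ineq3)
    then have "\<bar>norm du - norm dv\<bar> \<le> 3 * h" using dd by simp
    then have "eps / 30 * \<bar>norm du - norm dv\<bar> \<le> 1 / 30 * (3 * h)"
      using eps by (intro mult_mono) auto
    moreover have "\<bar>eps / 30 * norm du - eps / 30 * norm dv\<bar> = eps / 30 * \<bar>norm du - norm dv\<bar>"
    proof -
      have "eps / 30 * norm du - eps / 30 * norm dv = (eps / 30) * (norm du - norm dv)" by (simp add: right_diff_distrib)
      then show ?thesis using eps by (simp only: abs_mult)
    qed
    ultimately show ?thesis by simp
  qed
  have fu: "z \<in> feas X P C eps u \<longleftrightarrow> (\<forall>w\<in>C. inner z (P w) - inner du w - eps / 30 * d \<le> 0 \<and>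
      inner du w - inner z (P w) - eps / 30 * d \<le> 0)" for z
    by (simp add: feas_def du_def d_def)
  have fv: "z \<in> feas X P C eps v \<longleftrightarrow> (\<forall>w\<in>C. inner z (P w) - inner dv w - eps / 30 * norm dv \<le> 0 \<and>
      inner dv w - inner z (P w) - eps / 30 * norm dv \<le> 0)" for z
    by (simp add: feas_def dv_def)
  have zsw: "\<And>w. w \<in> C \<Longrightarrow> inner zs (P w) - inner du w - eps / 30 * d \<le> - (eps / 60) * d \<and>
      inner du w - inner zs (P w) - eps / 30 * d \<le> - (eps / 60) * d"
    using zs_feas by (simp add: du_def d_def)
  have epsd: "0 \<le> eps / 60 * d" using eps dp by simp
  have zsF: "zs \<in> feas X P C eps u" unfolding fu using zsw epsd by force
  define B where "B = beta X P C eps u"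
  have BF: "B \<in> feas X P C eps u" and Bmin: "\<And>y. y \<in> feas X P C eps u \<Longrightarrow> norm B \<le> norm y"
    using beta_props[OF zsF] by (auto simp: B_def)
  define zv where "zv = (1 - \<delta>) *\<^sub>R B + \<delta> *\<^sub>R zs"
  have zvF: "zv \<in> feas X P C eps v"
    unfolding fv
  proof
    fix w assume w: "w \<in> C"
    have iz: "inner zv (P w) = (1 - \<delta>) * inner B (P w) + \<delta> * inner zs (P w)" by (simp add: zv_def comb_inner)
    have B1: "inner B (P w) - inner du w - eps / 30 * d \<le> 0" "inner du w - inner B (P w) - eps / 30 * d \<le> 0"
      using BF w unfolding fu by auto
    have m1: "(1 - \<delta>) * (inner B (P w) - inner du w - eps / 30 * d) \<le> 0"
      "(1 - \<delta>) * (inner du w - inner B (P w) - eps / 30 * d) \<le> 0"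
      using B1 \<delta>1 by (auto intro: mult_nonneg_nonpos)
    have m2: "\<delta> * (inner zs (P w) - inner du w - eps / 30 * d) \<le> \<delta> * (- (eps / 60) * d)"
      "\<delta> * (inner du w - inner zs (P w) - eps / 30 * d) \<le> \<delta> * (- (eps / 60) * d)"
      using mult_left_mono[OF conjunct1[OF zsw[OF w]] \<delta>0] mult_left_mono[OF conjunct2[OF zsw[OF w]] \<delta>0] by auto
    have m3: "\<delta> * (- (eps / 60) * d) = - 4 * h" using \<delta>s by simp
    have a1: "inner zv (P w) - inner du w - eps / 30 * d \<le> - 4 * h"
      using m1(1) m2(1) m3 aff1[of \<delta> "inner B (P w)" "inner du w" "eps / 30 * d" "inner zs (P w)"] iz by linarith
    have a2: "inner du w - inner zv (P w) - eps / 30 * d \<le> - 4 * h"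
      using m1(2) m2(2) m3 aff2[of \<delta> "inner du w" "inner B (P w)" "eps / 30 * d" "inner zs (P w)"] iz by linarith
    have dnorm: "d = norm du" by (simp add: d_def)
    have c1: "inner zv (P w) - inner dv w - eps / 30 * norm dv \<le> 0" using a1[unfolded dnorm] a2[unfolded dnorm] abs_le_D1[OF pi[OF w]] abs_le_D2[OF pi[OF w]] abs_le_D1[OF pn] abs_le_D2[OF pn] h0 dnorm by linarith
    have c2: "inner dv w - inner zv (P w) - eps / 30 * norm dv \<le> 0" using a1[unfolded dnorm] a2[unfolded dnorm] abs_le_D1[OF pi[OF w]] abs_le_D2[OF pi[OF w]] abs_le_D1[OF pn] abs_le_D2[OF pn] h0 dnorm by linarith
    show "inner zv (P w) - inner dv w - eps / 30 * norm dv \<le> 0 \<and> inner dv w - inner zv (P w) - eps / 30 * norm dv \<le> 0"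
      using c1 c2 by simp
  qed
  define Bv where "Bv = beta X P C eps v"
  have BvF: "Bv \<in> feas X P C eps v" and Bvmin: "\<And>y. y \<in> feas X P C eps v \<Longrightarrow> norm Bv \<le> norm y"
    and Bvsq: "\<And>y. y \<in> feas X P C eps v \<Longrightarrow> (norm (y - Bv))^2 \<le> (norm y)^2 - (norm Bv)^2"
    using beta_props[OF zvF] by (auto simp: Bv_def)
  define yy where "yy = (1 - \<delta>) *\<^sub>R Bv + \<delta> *\<^sub>R zs"
  have yyF: "yy \<in> feas X P C eps u"
    unfolding fu
  proof
    fix w assume w: "w \<in> C"
    have iz: "inner yy (P w) = (1 - \<delta>) * inner Bv (P w) + \<delta> * inner zs (P w)" by (simp add: yy_def comb_inner)
    have B1: "inner Bv (P w) - inner dv w - eps / 30 * norm dv \<le> 0" "inner dv w - inner Bv (P w) - eps / 30 * norm dv \<le> 0"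
      using BvF w unfolding fv by auto
    have dnorm: "d = norm du" by (simp add: d_def)
    have B2a: "inner Bv (P w) - inner du w - eps / 30 * d \<le> 3.1 * h"
      unfolding dnorm using B1 abs_le_D1[OF pi[OF w]] abs_le_D2[OF pi[OF w]] abs_le_D1[OF pn] abs_le_D2[OF pn] h0 dnorm by linarith
    have B2b: "inner du w - inner Bv (P w) - eps / 30 * d \<le> 3.1 * h"
      unfolding dnorm using B1 abs_le_D1[OF pi[OF w]] abs_le_D2[OF pi[OF w]] abs_le_D1[OF pn] abs_le_D2[OF pn] h0 dnorm by linarith
    note B2 = B2a B2b
    have m1: "(1 - \<delta>) * (inner Bv (P w) - inner du w - eps / 30 * d) \<le> (1 - \<delta>) * (3.1 * h)"
      "(1 - \<delta>) * (inner du w - inner Bv (P w) - eps / 30 * d) \<le> (1 - \<delta>) * (3.1 * h)"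
      using B2 \<delta>1 by (auto intro: mult_left_mono)
    have m1': "(1 - \<delta>) * (3.1 * h) \<le> 3.1 * h" using \<delta>0 \<delta>1 h0 by (intro mult_left_le_one_le) auto
    have m2: "\<delta> * (inner zs (P w) - inner du w - eps / 30 * d) \<le> \<delta> * (- (eps / 60) * d)"
      "\<delta> * (inner du w - inner zs (P w) - eps / 30 * d) \<le> \<delta> * (- (eps / 60) * d)"
      using mult_left_mono[OF conjunct1[OF zsw[OF w]] \<delta>0] mult_left_mono[OF conjunct2[OF zsw[OF w]] \<delta>0] by auto
    have m3: "\<delta> * (- (eps / 60) * d) = - 4 * h" using \<delta>s by simp
    have a1: "inner yy (P w) - inner du w - eps / 30 * d \<le> 0"
      using m1(1) m1' m2(1) m3 h0 aff1[of \<delta> "inner Bv (P w)" "inner du w" "eps / 30 * d" "inner zs (P w)"] iz by linarith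
    have a2: "inner du w - inner yy (P w) - eps / 30 * d \<le> 0"
      using m1(2) m1' m2(2) m3 h0 aff2[of \<delta> "inner du w" "inner Bv (P w)" "eps / 30 * d" "inner zs (P w)"] iz by linarith
    show "inner yy (P w) - inner du w - eps / 30 * d \<le> 0 \<and> inner du w - inner yy (P w) - eps / 30 * d \<le> 0"
      using a1 a2 by simp
  qed
  have zsd: "norm zs \<le> d" using zs_norm by (simp add: d_def du_def)
  have X1: "norm B \<le> d" using Bmin[OF zsF] zsd by simp
  have Z1: "norm zv \<le> (1 - \<delta>) * norm B + \<delta> * d"
  proof -
    have "norm zv \<le> (1 - \<delta>) * norm B + \<delta> * norm zs" unfolding zv_def using \<delta>0 \<delta>1 by (intro norm_comb) auto
    also have "\<delta> * norm zs \<le> \<delta> * d" using zsd \<delta>0 by (intro mult_left_mono)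
    finally show ?thesis by simp
  qed
  have X2: "norm B \<le> (1 - \<delta>) * norm Bv + \<delta> * d"
  proof -
    have "norm B \<le> norm yy" using Bmin[OF yyF] .
    also have "norm yy \<le> (1 - \<delta>) * norm Bv + \<delta> * norm zs" unfolding yy_def using \<delta>0 \<delta>1 by (intro norm_comb) auto
    also have "\<delta> * norm zs \<le> \<delta> * d" using zsd \<delta>0 by (intro mult_left_mono)
    finally show ?thesis by simp
  qed
  have fa: "(norm zv)^2 - (norm Bv)^2 \<le> 4 * \<delta> * d^2"
    by (rule fin_alg) (use \<delta>0 \<delta>1 X1 Z1 X2 in auto)
  have sq: "(norm (zv - Bv))^2 \<le> 4 * \<delta> * d^2" using Bvsq[OF zvF] fa by linarith
  have "4 * \<delta> * d^2 = 960 * h * d / eps" using dp eps by (simp add: \<delta>_def power2_eq_square field_simps)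
  also have "\<dots> \<le> 16384 * h * d / eps" using h0 dp eps by (intro divide_right_mono mult_right_mono) auto
  also have "\<dots> = (128 * sqrt d / sqrt eps * sqrt h)^2"
    using dp eps h0 by (simp add: power_mult_distrib power_divide real_sqrt_pow2 power2_eq_square[of "128::real"])
  finally have "(norm (zv - Bv))^2 \<le> (128 * sqrt d / sqrt eps * sqrt h)^2" using sq by linarith
  then have "norm (zv - Bv) \<le> 128 * sqrt d / sqrt eps * sqrt h"
    by (rule power2_le_imp_le) (use dp eps h0 in auto)
  then show ?thesis
    by (simp add: Let_def zv_def B_def Bv_def \<delta>_def h_def d_def du_def)
qed



end
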